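(* Let $M\ge 1$ and let $\mathcal{F}$ be the (finite) set of phase-connection vectors $\boldsymbol{x}=[x_1^1,x_1^2,x_1^3,\dots,x_M^1,x_M^2,x_M^3]^T\in\{0,1\}^{3M}$ satisfying $\sum_{i=1}^3 x_m^i=1$ for every $m$. For $\boldsymbol{x}\in\mathcal{F}$ let $X=X(\boldsymbol{x})$ be the $M\times 3M$ block-diagonal matrix $X=\mathrm{diag}([x_1^1\ x_1^2\ x_1^3],\dots,[x_M^1\ x_M^2\ x_M^3])$. Fix real $3M\times 3M$ matrices $\hat K,\hat L$. Let $(\tilde{\boldsymbol v}^{\mathrm{ref}}(t),\tilde{\boldsymbol p}(t),\tilde{\boldsymbol q}(t))_{t\ge1}$ be random vectors with $\tilde{\boldsymbol v}^{\mathrm{ref}}(t)\in\mathbb R^{3M}$, $\tilde{\boldsymbol p}(t),\tilde{\boldsymbol q}(t)\in\mathbb R^M$, and for $\boldsymbol x\in\mathcal F$ define $$\tilde{\boldsymbol v}(t,\boldsymbol x)=X\tilde{\boldsymbol v}^{\mathrm{ref}}(t)+X\hat K X^T\tilde{\boldsymbol p}(t)+X\hat L X^T\tilde{\boldsymbol q}(t).$$ Let $\boldsymbol x^*\in\mathcal F$ (the correct phase connection) and suppose the observations are $\tilde{\boldsymbol v}(t)=\tilde{\boldsymbol v}(t,\boldsymbol x^* )+\boldsymbol n(t)$, where $\boldsymbol n(t)\sim\mathcal N(\mathbf 0_M,\Sigma_n)$ with $\Sigma_n$ positive definite. For $T\ge1$ and $\boldsymbol x\in\mathcal F$ let $$f_T(\boldsymbol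 x)=\frac1T\sum_{t=1}^T[\tilde{\boldsymbol v}(t)-\tilde{\boldsymbol v}(t,\boldsymbol x)]^T\Sigma_n^{-1}[\tilde{\boldsymbol v}(t)-\tilde{\boldsymbol v}(t,\boldsymbol x)].$$ Assume: (1) the $\boldsymbol n(t_k)$, $t_k\in\mathbb Z^+$, are i.i.d. and $\boldsymbol n(t_k)$ is independent of $\tilde{\boldsymbol v}^{\mathrm{ref}}(t_l),\tilde{\boldsymbol p}(t_l),\tilde{\boldsymbol q}(t_l)$ for all $t_k,t_l\in\mathbb Z^+$ (jointly, the noise sequence is independent of the input sequence); (2) the triples $(\tilde{\boldsymbol v}^{\mathrm{ref}}(t),\tilde{\boldsymbol p}(t),\tilde{\boldsymbol q}(t))$ are independent across distinct times $t$; and (3) for each $\boldsymbol x\in\mathcal F$, $\sup_t \mathbb E\|\tilde{\boldsymbol v}(t,\boldsymbol x^* )-\tilde{\boldsymbol v}(t,\boldsymbol x)\|^2<\infty$. Then, almost surely, $\lim_{T\to\infty} f_T(\boldsymbol x^* )$ exists and for every $\boldsymbol x\in\mathcal F$, $$\liminf_{T\to\infty} f_T(\boldsymbol x)\ \ge\ \lim_{T\to\infty} f_T(\boldsymbol x^* );$$ i.e., as $T\to\infty$, $\boldsymbol x^*$ is a global minimizer of $f_T$ over $\mathcal F$ (equivalently a maximizer of the Gaussian likelihood of the observations).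
   Context: Setting: phase identification for $M$ loads in a distribution network. $x_m^i=1$ indicates that load $m$ has the $i$-th of its three possible phase connections. $\tilde{\boldsymbol v}(t)$ denotes time-differenced voltage-magnitude measurements of the loads, $\tilde{\boldsymbol v}^{\mathrm{ref}}(t)$ time-differenced reference (substation) voltages, and $\tilde{\boldsymbol p}(t),\tilde{\boldsymbol q}(t)$ time-differenced real and reactive power measurements of the loads; $\hat K,\hat L$ are fixed sensitivity matrices derived from the linearized power flow model of the feeder. $f_T$ is, up to additive constants and positive scaling, the negative log-likelihood of the observations $\{\tilde{\boldsymbol v}(t)\}_{t=1}^T$ given the inputs, under the Gaussian noise model. *)

theory Defs
  imports "HOL-Probability.Probability"
begin

text \<open>Index conventions: loads are indexed by a finite type 'm (so M = CARD('m) \<ge> 1),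
  phases by the three-element type 3; a vector in R^{3M} is indexed by 'm \<times> 3,
  the entry at (m,i) being x_m^i.\<close>

definition phase_set :: "(real^('m::finite \<times> 3)) set" where
  "phase_set = {x. (\<forall>j. x $ j = 0 \<or> x $ j = 1) \<and> (\<forall>m. (\<Sum>i\<in>(UNIV::3 set). x $ (m, i)) = 1)}"

definition phase_mat :: "real^('m::finite \<times> 3) \<Rightarrow> real^('m \<times> 3)^'m" where
  "phase_mat x = (\<chi> m. \<chi> j. if fst j = m then x $ j else 0)"

definition model_volt ::
  "real^('m::finite \<times> 3)^('m \<times> 3) \<Rightarrow> real^('m \<times> 3)^('m \<times> 3) \<Rightarrow>
   real^('m \<times> 3) \<Rightarrow> real^'m \<Rightarrow> real^'m \<Rightarrow> real^('m \<times> 3) \<Rightarrow> real^'m" where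
  "model_volt K L vref p q x =
     phase_mat x *v vref + (phase_mat x ** K ** transpose (phase_mat x)) *v p
       + (phase_mat x ** L ** transpose (phase_mat x)) *v q"

definition pos_def_mat :: "real^'n::finite^'n \<Rightarrow> bool" where
  "pos_def_mat S \<longleftrightarrow> transpose S = S \<and> (\<forall>x. x \<noteq> 0 \<longrightarrow> x \<bullet> (S *v x) > 0)"

definition mvn_density :: "real^'n::finite^'n \<Rightarrow> real^'n \<Rightarrow> real" where
  "mvn_density S z = exp (- (z \<bullet> (matrix_inv S *v z)) / 2) / sqrt ((2 * pi) ^ CARD('n) * det S)"

definition cost_fun ::
  "real^('m::finite \<times> 3)^('m \<times> 3) \<Rightarrow> real^('m \<times> 3)^('m \<times> 3) \<Rightarrow> real^'m^'m \<Rightarrow>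
   (nat \<Rightarrow> 'w \<Rightarrow> real^('m \<times> 3)) \<Rightarrow> (nat \<Rightarrow> 'w \<Rightarrow> real^'m) \<Rightarrow> (nat \<Rightarrow> 'w \<Rightarrow> real^'m) \<Rightarrow>
   (nat \<Rightarrow> 'w \<Rightarrow> real^'m) \<Rightarrow> real^('m \<times> 3) \<Rightarrow> nat \<Rightarrow> real^('m \<times> 3) \<Rightarrow> 'w \<Rightarrow> real" where
  "cost_fun K L S Vr Pp Qq N xstar T x \<omega> =
     (1 / real T) * (\<Sum>t = 1..T.
        let d = (model_volt K L (Vr t \<omega>) (Pp t \<omega>) (Qq t \<omega>) xstar + N t \<omega>)
                - model_volt K L (Vr t \<omega>) (Pp t \<omega>) (Qq t \<omega>) x
        in d \<bullet> (matrix_inv S *v d))"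

end

theory Submission
  imports Defs
begin


lemma sq_add_le: "((x::real) + y)\<^sup>2 \<le> 2 * (x\<^sup>2 + y\<^sup>2)"
proof -
  have "0 \<le> (x - y)\<^sup>2" by simp
  then show ?thesis by (simp add: power2_eq_square algebra_simps)
qed

lemma abs_mult_le_sq: "\<bar>(a::real) * b\<bar> \<le> a\<^sup>2 + b\<^sup>2"
proof -
  have "0 \<le> (\<bar>a\<bar> - \<bar>b\<bar>)\<^sup>2" by simp
  also have "(\<bar>a\<bar> - \<bar>b\<bar>)\<^sup>2 = a\<^sup>2 + b\<^sup>2 - 2 * (\<bar>a\<bar> * \<bar>b\<bar>)"
    by (simp add: power2_eq_square algebra_simps)
  finally have "2 * \<bar>a * b\<bar> \<le> a\<^sup>2 + b\<^sup>2" by (simp add: abs_mult)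
  moreover have "0 \<le> \<bar>a * b\<bar>" by simp
  ultimately show ?thesis by linarith
qed

lemma (in prob_space) slln_L2:
  fixes Y :: "nat \<Rightarrow> 'a \<Rightarrow> real" and C :: real
  assumes meas[measurable]: "\<And>t. Y t \<in> borel_measurable M"
    and sq: "\<And>t. integrable M (\<lambda>\<omega>. (Y t \<omega>)\<^sup>2)"
    and orth: "\<And>s t. s \<noteq> t \<Longrightarrow> (\<integral>\<omega>. Y s \<omega> * Y t \<omega> \<partial>M) = 0"
    and bnd: "\<And>t. (\<integral>\<omega>. (Y t \<omega>)\<^sup>2 \<partial>M) \<le> C"
  shows "AE \<omega> in M. (\<lambda>T. (\<Sum>t=1..T. Y t \<omega>) / real T) \<longlonglongrightarrow> 0"
proof -
  have "0 \<le> (\<integral>\<omega>. (Y 0 \<omega>)\<^sup>2 \<partial>M)" by (rule integral_nonneg_AE) simp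
  then have C0: "0 \<le> C" using bnd[of 0] by linarith
  have int_prod: "integrable M (\<lambda>\<omega>. Y s \<omega> * Y t \<omega>)" for s t
    by (rule Bochner_Integration.integrable_bound[OF Bochner_Integration.integrable_add[OF sq[of s] sq[of t]]])
       (auto simp: abs_mult_le_sq)
  have int_sumsq: "integrable M (\<lambda>\<omega>. \<Sum>t\<in>A. (Y t \<omega>)\<^sup>2)" for A
    using sq by auto
  have int_sq_sum: "integrable M (\<lambda>\<omega>. (\<Sum>t\<in>A. \<bar>Y t \<omega>\<bar>)\<^sup>2)" if "finite A" for A
  proof (rule Bochner_Integration.integrable_bound[OF integrable_mult_right[OF int_sumsq[of A], of "real (card A)"]])
    show "AE x in M. norm ((\<Sum>t\<in>A. \<bar>Y t x\<bar>)\<^sup>2) \<le> norm (real (card A) * (\<Sum>t\<in>A. (Y t x)\<^sup>2))"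
      using sum_squared_le_sum_of_squares[of "\<lambda>t. \<bar>Y t _\<bar>" A]
      by (auto simp: sum_nonneg mult.commute)
  qed simp
  have int_sq_sum': "integrable M (\<lambda>\<omega>. (\<Sum>t\<in>A. Y t \<omega>)\<^sup>2)" if "finite A" for A
  proof (rule Bochner_Integration.integrable_bound[OF int_sq_sum[OF that]])
    show "AE x in M. norm ((\<Sum>t\<in>A. Y t x)\<^sup>2) \<le> norm ((\<Sum>t\<in>A. \<bar>Y t x\<bar>)\<^sup>2)"
      by (auto intro!: power_mono sum_abs simp: abs_le_square_iff[symmetric])
  qed simp
  define Sn where "Sn n \<omega> = (\<Sum>t\<in>{1..n}. Y t \<omega>)" for n \<omega>
  have ES: "(\<integral>\<omega>. (Sn n \<omega>)\<^sup>2 \<partial>M) \<le> real n * C" for n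
  proof -
    have "(\<integral>\<omega>. (Sn n \<omega>)\<^sup>2 \<partial>M) = (\<integral>\<omega>. (\<Sum>s\<in>{1..n}. \<Sum>t\<in>{1..n}. Y s \<omega> * Y t \<omega>) \<partial>M)"
      unfolding Sn_def power2_eq_square sum_product by simp
    also have "\<dots> = (\<Sum>s\<in>{1..n}. \<Sum>t\<in>{1..n}. (\<integral>\<omega>. Y s \<omega> * Y t \<omega> \<partial>M))"
      using int_prod by (simp add: Bochner_Integration.integral_sum)
    also have "\<dots> = (\<Sum>s\<in>{1..n}. \<Sum>t\<in>{1..n}. (if t = s then (\<integral>\<omega>. (Y s \<omega>)\<^sup>2 \<partial>M) else 0))"
      by (intro sum.cong refl) (auto simp: orth power2_eq_square)
    also have "\<dots> = (\<Sum>s\<in>{1..n}. (\<integral>\<omega>. (Y s \<omega>)\<^sup>2 \<partial>M))"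
      by simp
    also have "\<dots> \<le> (\<Sum>s\<in>{1..n}. C)" by (intro sum_mono bnd)
    finally show ?thesis by simp
  qed
  define R where "R k \<omega> = (\<Sum>t\<in>{k^2<..(k+1)^2}. \<bar>Y t \<omega>\<bar>)" for k \<omega>
  have cardR: "card {k^2<..(k+1)^2} = 2*k+1" for k :: nat
    by (simp add: power2_eq_square algebra_simps)
  have ER: "(\<integral>\<omega>. (R k \<omega>)\<^sup>2 \<partial>M) \<le> real (2*k+1)^2 * C" for k
  proof -
    have cs: "(R k \<omega>)\<^sup>2 \<le> real (2*k+1) * (\<Sum>t\<in>{k^2<..(k+1)^2}. (Y t \<omega>)\<^sup>2)" for \<omega>
    proof -
      have "(R k \<omega>)\<^sup>2 \<le> (\<Sum>t\<in>{k^2<..(k+1)^2}. (\<bar>Y t \<omega>\<bar>)\<^sup>2) * real (card {k^2<..(k+1)^2})"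
        unfolding R_def by (rule sum_squared_le_sum_of_squares)
      then show ?thesis by (simp only: cardR power2_abs mult.commute)
    qed
    have "(\<integral>\<omega>. (R k \<omega>)\<^sup>2 \<partial>M) \<le> (\<integral>\<omega>. real (2*k+1) * (\<Sum>t\<in>{k^2<..(k+1)^2}. (Y t \<omega>)\<^sup>2) \<partial>M)"
      unfolding R_def
      apply (rule integral_mono[OF int_sq_sum])
        apply simp
       apply (intro integrable_mult_right int_sumsq)
      apply (rule cs[unfolded R_def])
      done
    also have "\<dots> = real (2*k+1) * (\<Sum>t\<in>{k^2<..(k+1)^2}. (\<integral>\<omega>. (Y t \<omega>)\<^sup>2 \<partial>M))"
      using sq by (simp add: Bochner_Integration.integral_sum)
    also have "\<dots> \<le> real (2*k+1) * (\<Sum>t\<in>{k^2<..(k+1)^2}. C)"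
      by (intro mult_left_mono sum_mono bnd) auto
    finally show ?thesis by (simp add: cardR power2_eq_square mult_ac)
  qed
  define Z where "Z k \<omega> = (\<bar>Sn (k^2) \<omega>\<bar> + R k \<omega>) / (real k)^2" for k \<omega>
  have Z_nn: "0 \<le> Z k \<omega>" for k \<omega> unfolding Z_def R_def by (auto intro!: sum_nonneg divide_nonneg_nonneg)
  have [measurable]: "Z k \<in> borel_measurable M" for k unfolding Z_def R_def Sn_def by measurable
  have Zsq_le: "(Z k \<omega>)\<^sup>2 \<le> 2 * ((Sn (k^2) \<omega>)\<^sup>2 + (R k \<omega>)\<^sup>2) / (real k)^4" for k \<omega>
  proof -
    have "(\<bar>Sn (k^2) \<omega>\<bar> + R k \<omega>)\<^sup>2 \<le> 2 * ((Sn (k^2) \<omega>)\<^sup>2 + (R k \<omega>)\<^sup>2)"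
      using sq_add_le[of "\<bar>Sn (k^2) \<omega>\<bar>" "R k \<omega>"] by simp
    then show ?thesis unfolding Z_def
      by (simp add: power_divide divide_right_mono flip: power_mult)
  qed
  have int_Z: "integrable M (\<lambda>\<omega>. (Z k \<omega>)\<^sup>2)" for k
  proof (rule Bochner_Integration.integrable_bound)
    show "integrable M (\<lambda>\<omega>. 2 * ((Sn (k^2) \<omega>)\<^sup>2 + (R k \<omega>)\<^sup>2) / (real k)^4)"
      unfolding Sn_def R_def
      by (intro integrable_divide integrable_mult_right Bochner_Integration.integrable_add int_sq_sum' int_sq_sum) auto
    show "AE x in M. norm ((Z k x)\<^sup>2) \<le> norm (2 * ((Sn (k^2) x)\<^sup>2 + (R k x)\<^sup>2) / (real k)^4)"
    proof (intro AE_I2)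
      fix x have "0 \<le> 2 * ((Sn (k^2) x)\<^sup>2 + (R k x)\<^sup>2) / (real k)^4" by simp
      then show "norm ((Z k x)\<^sup>2) \<le> norm (2 * ((Sn (k^2) x)\<^sup>2 + (R k x)\<^sup>2) / (real k)^4)"
        using Zsq_le[of k x] by simp
    qed
  qed simp
  have EZ: "(\<integral>\<omega>. (Z k \<omega>)\<^sup>2 \<partial>M) \<le> 20 * C * inverse (real k ^ 2)" for k
  proof (cases "k = 0")
    case True then show ?thesis by (simp add: Z_def)
  next
    case False
    have "(\<integral>\<omega>. (Z k \<omega>)\<^sup>2 \<partial>M) \<le> (\<integral>\<omega>. 2 * ((Sn (k^2) \<omega>)\<^sup>2 + (R k \<omega>)\<^sup>2) / (real k)^4 \<partial>M)"
      apply (rule integral_mono[OF int_Z])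
       apply (unfold Sn_def R_def)
       apply (intro integrable_divide integrable_mult_right Bochner_Integration.integrable_add int_sq_sum' int_sq_sum)
        apply simp
       apply simp
      apply (rule Zsq_le[unfolded Sn_def R_def])
      done
    also have "\<dots> = 2 * ((\<integral>\<omega>. (Sn (k^2) \<omega>)\<^sup>2 \<partial>M) + (\<integral>\<omega>. (R k \<omega>)\<^sup>2 \<partial>M)) / (real k)^4"
      unfolding Sn_def R_def
      by (simp add: integral_divide_zero integral_mult_right_zero Bochner_Integration.integral_add int_sq_sum' int_sq_sum)
    also have "\<dots> \<le> 2 * (real (k^2) * C + real (2*k+1)^2 * C) / (real k)^4"
      by (intro divide_right_mono mult_left_mono add_mono ES ER) auto
    also have "\<dots> \<le> 20 * C * inverse (real k ^ 2)"
    proof -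
      have k1: "1 \<le> real k" using False by simp
      have kk: "real k \<le> (real k)^2" "1 \<le> (real k)^2" using k1
        by (auto intro: self_le_power one_le_power)
      have "real (2*k+1)^2 \<le> 9 * (real k)^2" using kk by (simp add: power2_eq_square algebra_simps)
      then have "real (2*k+1)^2 * C \<le> 9 * (real k)^2 * C" using C0 by (rule mult_right_mono)
      then have "2 * (real (k^2) * C + real (2*k+1)^2 * C) \<le> 20 * C * (real k)^2"
        by (simp add: algebra_simps)
      then have "2 * (real (k^2) * C + real (2*k+1)^2 * C) / (real k)^4 \<le> 20 * C * (real k)^2 / (real k)^4"
        by (rule divide_right_mono) simp
      also have "20 * C * (real k)^2 / (real k)^4 = 20 * C * inverse (real k ^ 2)"
      proof -
        have "real k \<noteq> 0" using k1 by auto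
        then show ?thesis by (simp add: power2_eq_square power4_eq_xxxx field_simps)
      qed
      finally show ?thesis .
    qed
    finally show ?thesis .
  qed
  have nnZ: "(\<integral>\<^sup>+\<omega>. ennreal ((Z k \<omega>)\<^sup>2) \<partial>M) \<le> ennreal (20 * C * inverse (real k ^ 2))" for k
  proof -
    have "(\<integral>\<^sup>+\<omega>. ennreal ((Z k \<omega>)\<^sup>2) \<partial>M) = ennreal (\<integral>\<omega>. (Z k \<omega>)\<^sup>2 \<partial>M)"
      by (rule nn_integral_eq_integral[OF int_Z]) simp
    then show ?thesis by (simp only:) (rule ennreal_leI[OF EZ])
  qed
  have summ: "summable (\<lambda>k. 20 * C * inverse (real k ^ 2))"
    by (intro summable_mult inverse_power_summable) simp
  have "(\<integral>\<^sup>+\<omega>. (\<Sum>k. ennreal ((Z k \<omega>)\<^sup>2)) \<partial>M) = (\<Sum>k. \<integral>\<^sup>+\<omega>. ennreal ((Z k \<omega>)\<^sup>2) \<partial>M)"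
    by (rule nn_integral_suminf) measurable
  also have "\<dots> \<le> (\<Sum>k. ennreal (20 * C * inverse (real k ^ 2)))"
    by (rule suminf_le[OF nnZ summableI summableI])
  also have "\<dots> < \<infinity>"
  proof -
    have nn: "\<And>i. 0 \<le> 20 * C * inverse (real i ^ 2)" using C0 by simp
    have "(\<Sum>k. ennreal (20 * C * inverse (real k ^ 2))) \<noteq> top"
      by (rule ennreal_suminf_neq_top[OF summ nn])
    then show ?thesis by (simp only: less_top infinity_ennreal_def)
  qed
  finally have fin: "(\<integral>\<^sup>+\<omega>. (\<Sum>k. ennreal ((Z k \<omega>)\<^sup>2)) \<partial>M) \<noteq> \<infinity>" by simp
  have "AE \<omega> in M. (\<Sum>k. ennreal ((Z k \<omega>)\<^sup>2)) \<noteq> \<infinity>"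
    by (rule nn_integral_PInf_AE[OF _ fin]) measurable
  then show ?thesis
  proof (rule AE_mp, intro AE_I2 impI)
    fix \<omega> assume "(\<Sum>k. ennreal ((Z k \<omega>)\<^sup>2)) \<noteq> \<infinity>"
    then have "summable (\<lambda>k. (Z k \<omega>)\<^sup>2)" by (intro summable_suminf_not_top) auto
    then have "(\<lambda>k. (Z k \<omega>)\<^sup>2) \<longlonglongrightarrow> 0" by (rule summable_LIMSEQ_zero)
    then have "(\<lambda>k. sqrt ((Z k \<omega>)\<^sup>2)) \<longlonglongrightarrow> sqrt 0" by (rule tendsto_real_sqrt)
    then have Zlim: "(\<lambda>k. Z k \<omega>) \<longlonglongrightarrow> 0" using Z_nn by simp
    define \<kappa> where "\<kappa> T = nat \<lfloor>sqrt (real T)\<rfloor>" for T :: nat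
    have kap: "(\<kappa> T)^2 \<le> T \<and> T \<le> (\<kappa> T + 1)^2 \<and> (1 \<le> T \<longrightarrow> 1 \<le> \<kappa> T)" for T
    proof -
      let ?s = "sqrt (real T)"
      have fl: "real (\<kappa> T) = of_int \<lfloor>?s\<rfloor>" unfolding \<kappa>_def by simp
      have a: "real (\<kappa> T) \<le> ?s" using fl by linarith
      have b: "?s < real (\<kappa> T) + 1" using fl by linarith
      have "real ((\<kappa> T)^2) \<le> real T"
        using power_mono[OF a, of 2] by simp
      moreover have "real T \<le> real ((\<kappa> T + 1)^2)"
        using power_mono[OF less_imp_le[OF b], of 2] by (simp add: add.commute)
      moreover have "1 \<le> T \<longrightarrow> 1 \<le> \<kappa> T"
        unfolding \<kappa>_def by (simp add: le_nat_iff)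
      ultimately show ?thesis by (simp only: of_nat_le_iff)
    qed
    have "filterlim \<kappa> at_top sequentially"
      unfolding filterlim_at_top
    proof
      fix K :: nat
      show "\<forall>\<^sub>F T in sequentially. K \<le> \<kappa> T"
        using eventually_ge_at_top[of "K^2"]
      proof (rule eventually_mono)
        fix T assume "K^2 \<le> T"
        then have "real (K^2) \<le> real T" by (simp only: of_nat_le_iff)
        then have "real K \<le> sqrt (real T)" by (intro real_le_rsqrt) simp
        then show "K \<le> \<kappa> T" unfolding \<kappa>_def by (simp add: le_nat_iff le_floor_iff)
      qed
    qed
    with Zlim have Zk: "(\<lambda>T. Z (\<kappa> T) \<omega>) \<longlonglongrightarrow> 0" by (rule filterlim_compose)
    show "(\<lambda>T. (\<Sum>t=1..T. Y t \<omega>) / real T) \<longlonglongrightarrow> 0"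
    proof (rule Lim_null_comparison[OF _ Zk])
      show "\<forall>\<^sub>F T in sequentially. norm ((\<Sum>t=1..T. Y t \<omega>) / real T) \<le> Z (\<kappa> T) \<omega>"
        using eventually_ge_at_top[of 1]
      proof (rule eventually_mono)
        fix T :: nat assume T1: "1 \<le> T"
        define k where "k = \<kappa> T"
        have k: "k^2 \<le> T" "T \<le> (k+1)^2" "1 \<le> k" using kap[of T] T1 by (auto simp: k_def)
        have split: "{1..T} = {1..k^2} \<union> {k^2<..T}" using k by auto
        have "(\<Sum>t=1..T. Y t \<omega>) = Sn (k^2) \<omega> + (\<Sum>t\<in>{k^2<..T}. Y t \<omega>)"
          unfolding Sn_def split by (rule sum.union_disjoint) auto
        moreover have "\<bar>\<Sum>t\<in>{k^2<..T}. Y t \<omega>\<bar> \<le> R k \<omega>"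
        proof -
          have "\<bar>\<Sum>t\<in>{k^2<..T}. Y t \<omega>\<bar> \<le> (\<Sum>t\<in>{k^2<..T}. \<bar>Y t \<omega>\<bar>)" by (rule sum_abs)
          also have "\<dots> \<le> R k \<omega>" unfolding R_def
            by (rule sum_mono2) (use k in auto)
          finally show ?thesis .
        qed
        ultimately have num: "\<bar>\<Sum>t=1..T. Y t \<omega>\<bar> \<le> \<bar>Sn (k^2) \<omega>\<bar> + R k \<omega>" by linarith
        have kpos: "0 < (real k)^2" using k by simp
        have "real (k^2) \<le> real T" using k(1) by (simp only: of_nat_le_iff)
        then have kT: "(real k)^2 \<le> real T" by simp
        have "norm ((\<Sum>t=1..T. Y t \<omega>) / real T) = \<bar>\<Sum>t=1..T. Y t \<omega>\<bar> / real T" by simp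
        also have "\<dots> \<le> \<bar>\<Sum>t=1..T. Y t \<omega>\<bar> / (real k)^2"
          by (rule divide_left_mono[OF kT]) (use kpos T1 in auto)
        also have "\<dots> \<le> Z k \<omega>" unfolding Z_def
          by (rule divide_right_mono[OF num]) simp
        finally show "norm ((\<Sum>t=1..T. Y t \<omega>) / real T) \<le> Z (\<kappa> T) \<omega>" by (simp add: k_def)
      qed
    qed
  qed
qed



lemma pd_invertible:
  fixes S :: "real^'n::finite^'n"
  assumes "pos_def_mat S"
  shows "invertible S"
proof -
  have "\<forall>x. S *v x = 0 \<longrightarrow> x = 0"
  proof (intro allI impI)
    fix x assume "S *v x = 0"
    then show "x = 0" using assms unfolding pos_def_mat_def by (metis inner_zero_right less_irrefl)
  qed
  then obtain B where "B ** S = mat 1" using matrix_left_invertible_ker by blast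
  then show ?thesis unfolding invertible_def using matrix_left_right_inverse by blast
qed

lemma matrix_inv_props:
  fixes S :: "real^'n::finite^'n"
  assumes "invertible S"
  shows "S ** matrix_inv S = mat 1" "matrix_inv S ** S = mat 1"
proof -
  have "\<exists>A'. S ** A' = mat 1 \<and> A' ** S = mat 1" using assms unfolding invertible_def .
  then have "S ** matrix_inv S = mat 1 \<and> matrix_inv S ** S = mat 1"
    unfolding matrix_inv_def by (rule someI_ex)
  then show "S ** matrix_inv S = mat 1" "matrix_inv S ** S = mat 1" by auto
qed

lemma inv_psd:
  fixes S :: "real^'n::finite^'n"
  assumes "pos_def_mat S"
  shows "0 \<le> x \<bullet> (matrix_inv S *v x)"
    and "x \<noteq> 0 \<Longrightarrow> 0 < x \<bullet> (matrix_inv S *v x)"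
proof -
  define w where "w = matrix_inv S *v x"
  have SQ: "S ** matrix_inv S = mat 1" using matrix_inv_props[OF pd_invertible[OF assms]] by simp
  have xw: "x = S *v w" unfolding w_def by (simp add: matrix_vector_mul_assoc SQ)
  have "x \<bullet> w = w \<bullet> (S *v w)" by (metis xw inner_commute)
  then have e: "x \<bullet> (matrix_inv S *v x) = w \<bullet> (S *v w)" by (simp add: w_def)
  show "0 \<le> x \<bullet> (matrix_inv S *v x)"
    using assms unfolding e pos_def_mat_def by (cases "w = 0") (auto intro: less_imp_le)
  assume "x \<noteq> 0"
  then have "w \<noteq> 0" using xw by auto
  then show "0 < x \<bullet> (matrix_inv S *v x)" using assms unfolding e pos_def_mat_def by auto
qed

lemma quad_scale: "(c *\<^sub>R x) \<bullet> (A *v (c *\<^sub>R x)) = c\<^sup>2 * (x \<bullet> (A *v x))"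
  for A :: "real^'n::finite^'n"
  by (simp add: matrix_vector_mult_scaleR power2_eq_square)

lemma quad_lower:
  fixes A :: "real^'n::finite^'n"
  assumes pos: "\<And>x. x \<noteq> 0 \<Longrightarrow> 0 < x \<bullet> (A *v x)"
  shows "\<exists>\<mu>>0. \<forall>x. \<mu> * (norm x)\<^sup>2 \<le> x \<bullet> (A *v x)"
proof -
  have cont: "continuous_on (sphere 0 1) (\<lambda>x. x \<bullet> (A *v x))"
    by (intro continuous_intros matrix_vector_mult_linear_continuous_on[THEN continuous_on_compose2[of UNIV]]) auto
  have ne: "sphere (0::real^'n) 1 \<noteq> {}" by simp
  obtain u where u: "u \<in> sphere 0 1" and umin: "\<And>y. y \<in> sphere 0 1 \<Longrightarrow> u \<bullet> (A *v u) \<le> y \<bullet> (A *v y)"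
    using continuous_attains_inf[OF compact_sphere ne cont] by blast
  have "u \<noteq> 0" using u by auto
  then have mu: "0 < u \<bullet> (A *v u)" by (rule pos)
  have "u \<bullet> (A *v u) * (norm x)\<^sup>2 \<le> x \<bullet> (A *v x)" for x
  proof (cases "x = 0")
    case True then show ?thesis by simp
  next
    case False
    define y where "y = (1 / norm x) *\<^sub>R x"
    have y: "y \<in> sphere 0 1" using False by (simp add: y_def)
    have xy: "x = norm x *\<^sub>R y" using False by (simp add: y_def)
    have "x \<bullet> (A *v x) = (norm x)\<^sup>2 * (y \<bullet> (A *v y))"
      by (subst (1 2) xy) (rule quad_scale)
    then show ?thesis using mult_right_mono[OF umin[OF y], of "(norm x)\<^sup>2"] by (simp add: mult.commute)
  qed
  then show ?thesis using mu by blast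
qed

lemma dot_mat: "x \<bullet> (A *v y) = (transpose A *v x) \<bullet> y"
  for A :: "real^'n::finite^'m::finite"
  unfolding inner_vec_def matrix_vector_mult_def transpose_def
  by (simp add: sum_distrib_left sum_distrib_right mult_ac) (rule sum.swap)

lemma quad_meas[measurable]: "(\<lambda>z. z \<bullet> (A *v z)) \<in> borel_measurable borel"
  for A :: "real^'n::finite^'n"
  by (intro borel_measurable_continuous_onI continuous_intros
      matrix_vector_mult_linear_continuous_on[THEN continuous_on_compose2[of UNIV]]) auto

lemma mvn_meas[measurable]: "mvn_density S \<in> borel_measurable borel"
  unfolding mvn_density_def by measurable

lemma exp_bound: "0 \<le> (q::real) \<Longrightarrow> (1 + q)\<^sup>2 * exp (- q / 2) \<le> 64 * exp (- q / 4)"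
proof -
  assume q: "0 \<le> q"
  have "1 + q / 8 \<le> exp (q / 8)" by (rule exp_ge_add_one_self)
  then have "(1 + q / 8)\<^sup>2 \<le> (exp (q / 8))\<^sup>2" using q by (intro power_mono) auto
  also have "(exp (q / 8))\<^sup>2 = exp (q / 4)" by (simp add: power2_eq_square flip: exp_add)
  finally have "(1 + q)\<^sup>2 \<le> 64 * exp (q / 4)"
    using q by (simp add: power2_eq_square algebra_simps)
  then have "(1 + q)\<^sup>2 * exp (- q / 2) \<le> 64 * exp (q / 4) * exp (- q / 2)"
    by (rule mult_right_mono) simp
  also have "\<dots> = 64 * exp (- q / 4)" by (simp flip: exp_add)
  finally show ?thesis .
qed

lemma gauss_facts:
  fixes S :: "real^'n::finite^'n"
  assumes pd: "pos_def_mat S"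
    and tot: "(\<integral>\<^sup>+z. ennreal (mvn_density S z) \<partial>lborel) = 1"
  shows "\<And>z. 0 \<le> mvn_density S z"
    and "integrable lborel (\<lambda>z. (1 + z \<bullet> (matrix_inv S *v z))\<^sup>2 * mvn_density S z)"
proof -
  define q where "q z = z \<bullet> (matrix_inv S *v z)" for z :: "real^'n"
  define c0 where "c0 = sqrt ((2 * pi) ^ CARD('n) * det S)"
  have q0: "0 \<le> q z" for z unfolding q_def by (rule inv_psd[OF pd])
  have [measurable]: "q \<in> borel_measurable borel" unfolding q_def by measurable
  have dens: "mvn_density S z = exp (- q z / 2) / c0" for z
    unfolding mvn_density_def q_def c0_def by simp
  have c0pos: "0 < c0"
  proof (rule ccontr)
    assume "\<not> 0 < c0"
    then have "ennreal (mvn_density S z) = 0" for z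
      unfolding dens ennreal_eq_0_iff by (intro divide_nonneg_nonpos) auto
    then show False using tot by simp
  qed
  show dnn: "0 \<le> mvn_density S z" for z unfolding dens using c0pos by simp
  have e2: "(\<integral>\<^sup>+z. ennreal (exp (- q z / 2)) \<partial>lborel) = ennreal c0"
  proof -
    have "(\<integral>\<^sup>+z. ennreal (exp (- q z / 2)) \<partial>lborel) = (\<integral>\<^sup>+z. ennreal c0 * ennreal (mvn_density S z) \<partial>lborel)"
      using c0pos by (intro nn_integral_cong) (simp add: dens flip: ennreal_mult)
    also have "\<dots> = ennreal c0 * (\<integral>\<^sup>+z. ennreal (mvn_density S z) \<partial>lborel)"
      by (rule nn_integral_cmult) simp
    finally show ?thesis using tot by simp
  qed
  define c where "c = sqrt 2"
  have cne: "c \<noteq> 0" unfolding c_def by simp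
  have e4: "(\<integral>\<^sup>+z. ennreal (exp (- q z / 4)) \<partial>lborel) < \<infinity>"
  proof -
    have "(\<integral>\<^sup>+z. ennreal (exp (- q z / 4)) \<partial>lborel)
        = (\<integral>\<^sup>+z. ennreal (exp (- q z / 4)) \<partial>(density (distr lborel borel (\<lambda>x. 0 + c *\<^sub>R x)) (\<lambda>x. ennreal (\<bar>c\<bar> ^ DIM(real^'n)))))"
      by (simp only: lborel_affine[OF cne, of 0, symmetric])
    also have "\<dots> = (\<integral>\<^sup>+z. ennreal (\<bar>c\<bar> ^ DIM(real^'n)) * ennreal (exp (- q z / 4)) \<partial>(distr lborel borel (\<lambda>x. 0 + c *\<^sub>R x)))"
      by (rule nn_integral_density) auto
    also have "\<dots> = (\<integral>\<^sup>+z. ennreal (\<bar>c\<bar> ^ DIM(real^'n)) * ennreal (exp (- q (0 + c *\<^sub>R z) / 4)) \<partial>lborel)"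
      by (rule nn_integral_distr) auto
    also have "\<dots> = (\<integral>\<^sup>+z. ennreal (\<bar>c\<bar> ^ DIM(real^'n)) * ennreal (exp (- q z / 2)) \<partial>lborel)"
    proof (intro nn_integral_cong)
      fix z :: "real^'n"
      have "q (0 + c *\<^sub>R z) = c\<^sup>2 * q z" unfolding q_def by (simp only: add_0_left quad_scale)
      then have "q (0 + c *\<^sub>R z) = 2 * q z" unfolding c_def by simp
      then show "ennreal (\<bar>c\<bar> ^ DIM(real^'n)) * ennreal (exp (- q (0 + c *\<^sub>R z) / 4))
               = ennreal (\<bar>c\<bar> ^ DIM(real^'n)) * ennreal (exp (- q z / 2))" by simp
    qed
    also have "\<dots> = ennreal (\<bar>c\<bar> ^ DIM(real^'n)) * ennreal c0"
      by (subst nn_integral_cmult) (simp_all only: e2 measurable_lborel2, measurable)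
    also have "\<dots> < \<infinity>" by (simp add: ennreal_mult_less_top)
    finally show ?thesis .
  qed
  show "integrable lborel (\<lambda>z. (1 + z \<bullet> (matrix_inv S *v z))\<^sup>2 * mvn_density S z)"
  proof (rule integrableI_bounded)
    show "(\<lambda>z. (1 + z \<bullet> (matrix_inv S *v z))\<^sup>2 * mvn_density S z) \<in> borel_measurable lborel"
      by simp
    have "(\<integral>\<^sup>+z. ennreal (norm ((1 + z \<bullet> (matrix_inv S *v z))\<^sup>2 * mvn_density S z)) \<partial>lborel)
        \<le> (\<integral>\<^sup>+z. ennreal (64 / c0) * ennreal (exp (- q z / 4)) \<partial>lborel)"
    proof (intro nn_integral_mono)
      fix z :: "real^'n"
      have "norm ((1 + z \<bullet> (matrix_inv S *v z))\<^sup>2 * mvn_density S z) = (1 + q z)\<^sup>2 * exp (- q z / 2) / c0"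
        using dnn[of z] c0pos by (simp add: dens q_def)
      also have "\<dots> \<le> 64 * exp (- q z / 4) / c0"
        by (rule divide_right_mono[OF exp_bound[OF q0]]) (use c0pos in auto)
      finally show "ennreal (norm ((1 + z \<bullet> (matrix_inv S *v z))\<^sup>2 * mvn_density S z))
          \<le> ennreal (64 / c0) * ennreal (exp (- q z / 4))"
        using c0pos by (simp add: ennreal_leI flip: ennreal_mult)
    qed
    also have "\<dots> = ennreal (64 / c0) * (\<integral>\<^sup>+z. ennreal (exp (- q z / 4)) \<partial>lborel)"
      by (rule nn_integral_cmult) simp
    also have "\<dots> < \<infinity>" using e4 by (simp add: ennreal_mult_less_top)
    finally show "(\<integral>\<^sup>+z. ennreal (norm ((1 + z \<bullet> (matrix_inv S *v z))\<^sup>2 * mvn_density S z)) \<partial>lborel) < \<infinity>" .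
  qed
qed

lemma lborel_neg_integral:
  fixes f :: "'a::euclidean_space \<Rightarrow> real"
  assumes [measurable]: "f \<in> borel_measurable borel"
  shows "(\<integral>z. f z \<partial>lborel) = (\<integral>z. f (- z) \<partial>lborel)"
proof -
  have cne: "(-1::real) \<noteq> 0" by simp
  have "lborel = density (distr lborel borel (\<lambda>x::'a. 0 + (-1) *\<^sub>R x)) (\<lambda>x. ennreal (\<bar>-1::real\<bar> ^ DIM('a)))"
    by (rule lborel_affine[OF cne])
  also have "\<dots> = distr lborel borel (\<lambda>x::'a. - x)" by (simp add: density_1)
  finally have L: "lborel = distr lborel borel (\<lambda>x::'a. - x)" .
  have "(\<integral>z. f z \<partial>lborel) = (\<integral>z. f z \<partial>distr lborel borel (\<lambda>x::'a. - x))"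
    by (subst L[symmetric]) (rule refl)
  also have "\<dots> = (\<integral>z. f (- z) \<partial>lborel)"
    by (rule integral_distr) auto
  finally show ?thesis .
qed

lemma gauss_integrable:
  fixes S :: "real^'n::finite^'n"
  assumes pd: "pos_def_mat S"
    and tot: "(\<integral>\<^sup>+z. ennreal (mvn_density S z) \<partial>lborel) = 1"
    and g[measurable]: "g \<in> borel_measurable borel"
    and bd: "\<And>z. \<bar>g z\<bar> \<le> K * (1 + z \<bullet> (matrix_inv S *v z))\<^sup>2"
  shows "integrable lborel (\<lambda>z. mvn_density S z * g z)"
proof (rule Bochner_Integration.integrable_bound)
  show "integrable lborel (\<lambda>z. K * ((1 + z \<bullet> (matrix_inv S *v z))\<^sup>2 * mvn_density S z))"
    by (intro integrable_mult_right gauss_facts(2)[OF pd tot])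
  show "(\<lambda>z. mvn_density S z * g z) \<in> borel_measurable lborel" by simp
  show "AE x in lborel. norm (mvn_density S x * g x) \<le> norm (K * ((1 + x \<bullet> (matrix_inv S *v x))\<^sup>2 * mvn_density S x))"
  proof (intro AE_I2)
    fix x :: "real^'n"
    have d0: "0 \<le> mvn_density S x" by (rule gauss_facts(1)[OF pd tot])
    have "norm (mvn_density S x * g x) = mvn_density S x * \<bar>g x\<bar>" using d0 by (simp add: abs_mult)
    also have "\<dots> \<le> mvn_density S x * (K * (1 + x \<bullet> (matrix_inv S *v x))\<^sup>2)"
      by (rule mult_left_mono[OF bd d0])
    also have "\<dots> \<le> norm (K * ((1 + x \<bullet> (matrix_inv S *v x))\<^sup>2 * mvn_density S x))"
      by (simp add: mult_ac)
    finally show "norm (mvn_density S x * g x) \<le> norm (K * ((1 + x \<bullet> (matrix_inv S *v x))\<^sup>2 * mvn_density S x))" .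
  qed
qed

lemma mvn_sym: "mvn_density S (- z) = mvn_density S z"
proof -
  have "(- z) \<bullet> (matrix_inv S *v (- z)) = z \<bullet> (matrix_inv S *v z)"
    using quad_scale[of "-1" z "matrix_inv S"] by simp
  then show ?thesis unfolding mvn_density_def by simp
qed

lemma (in prob_space) indep_var_sub:
  assumes ind: "indep_set (sigma_sets (space M) A) (sigma_sets (space M) B)"
    and X: "X \<in> measurable (sigma (space M) A) S" and Y: "Y \<in> measurable (sigma (space M) B) T"
    and A: "A \<subseteq> Pow (space M)" and B: "B \<subseteq> Pow (space M)"
    and rX: "random_variable S X" and rY: "random_variable T Y"
  shows "indep_var S X T Y"
proof -
  have sx: "{X -` a \<inter> space M |a. a \<in> sets S} \<subseteq> sigma_sets (space M) A"
  proof safe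
    fix a assume "a \<in> sets S"
    from measurable_sets[OF X this] show "X -` a \<inter> space M \<in> sigma_sets (space M) A"
      using A by (simp add: space_measure_of sets_measure_of)
  qed
  have sy: "{Y -` a \<inter> space M |a. a \<in> sets T} \<subseteq> sigma_sets (space M) B"
  proof safe
    fix a assume "a \<in> sets T"
    from measurable_sets[OF Y this] show "Y -` a \<inter> space M \<in> sigma_sets (space M) B"
      using B by (simp add: space_measure_of sets_measure_of)
  qed
  show ?thesis
    unfolding indep_var_eq
  proof (intro conjI rX rY)
    show "indep_set (sigma_sets (space M) {X -` a \<inter> space M |a. a \<in> sets S})
        (sigma_sets (space M) {Y -` a \<inter> space M |a. a \<in> sets T})"
      using ind sigma_sets_mono[OF sx] sigma_sets_mono[OF sy]
      unfolding indep_sets2_eq by blast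
  qed
qed

lemma (in prob_space) indep_vars_pair:
  assumes ind: "indep_vars M' X I" and st: "s \<in> I" "t \<in> I" "s \<noteq> t"
  shows "indep_var (M' s) (X s) (M' t) (X t)"
proof -
  define F where "F i = sigma_sets (space M) {X i -` A \<inter> space M |A. A \<in> sets (M' i)}" for i
  have rv: "\<And>i. i \<in> I \<Longrightarrow> random_variable (M' i) (X i)" and IF: "indep_sets F I"
    using ind unfolding indep_vars_def F_def by auto
  have ev: "F i \<subseteq> events" if "i \<in> I" for i using IF that unfolding indep_sets_def by auto
  show ?thesis
    unfolding indep_var_eq indep_sets2_eq
  proof (intro conjI rv st ballI)
    show "sigma_sets (space M) {X s -` A \<inter> space M |A. A \<in> sets (M' s)} \<subseteq> events"
      using ev[OF st(1)] by (simp add: F_def)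
    show "sigma_sets (space M) {X t -` A \<inter> space M |A. A \<in> sets (M' t)} \<subseteq> events"
      using ev[OF st(2)] by (simp add: F_def)
    fix a b assume a: "a \<in> sigma_sets (space M) {X s -` A \<inter> space M |A. A \<in> sets (M' s)}"
      and b: "b \<in> sigma_sets (space M) {X t -` A \<inter> space M |A. A \<in> sets (M' t)}"
    define G where "G j = (if j = s then a else b)" for j
    have "prob (\<Inter> (G ` {s, t})) = (\<Prod>j\<in>{s, t}. prob (G j))"
      by (rule indep_setsD[OF IF]) (use st a b in \<open>auto simp: G_def F_def\<close>)
    then show "prob (a \<inter> b) = prob a * prob b" using st by (simp add: G_def Int_commute)
  qed
qed

lemma (in prob_space) meas_sigma_sub:
  assumes "A \<subseteq> events" "f \<in> measurable (sigma (space M) A) N"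
  shows "f \<in> measurable M N"
proof (rule measurable_from_subalg[OF _ assms(2)])
  have "A \<subseteq> Pow (space M)" using assms(1) sets.sets_into_space by auto
  then show "subalgebra M (sigma (space M) A)"
    unfolding subalgebra_def using assms(1)
    by (simp add: space_measure_of sets_measure_of sets.sigma_sets_subset)
qed



lemma cont_mv[continuous_intros]: "continuous_on s f \<Longrightarrow> continuous_on s (\<lambda>x. A *v f x)"
  for A :: "real^'n::finite^'m::finite"
  by (rule continuous_on_compose2[OF matrix_vector_mult_linear_continuous_on[of UNIV A]]) auto

locale phase_setup =
  fixes P :: "'w measure"
    and K L :: "real^('m::finite \<times> 3)^('m \<times> 3)"
    and S :: "real^'m^'m"
    and Vr :: "nat \<Rightarrow> 'w \<Rightarrow> real^('m \<times> 3)"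
    and Pp Qq N :: "nat \<Rightarrow> 'w \<Rightarrow> real^'m"
    and xstar :: "real^('m \<times> 3)"
  assumes ps: "prob_space P"
    and S_pd: "pos_def_mat S"
    and gauss: "\<And>t. t \<ge> 1 \<Longrightarrow> distributed P lborel (N t) (\<lambda>z. ennreal (mvn_density S z))"
    and inputs_rv: "\<And>t. t \<ge> 1 \<Longrightarrow> (\<lambda>\<omega>. (Vr t \<omega>, Pp t \<omega>, Qq t \<omega>)) \<in> borel_measurable P"
    and noise_iid: "prob_space.indep_vars P (\<lambda>_. borel) N {1..}"
    and noise_indep_inputs:
      "prob_space.indep_set P
         (sigma_sets (space P) (\<Union>t\<in>{1..}. {N t -` A \<inter> space P | A. A \<in> sets borel}))
         (sigma_sets (space P) (\<Union>t\<in>{1..}.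
            {(\<lambda>\<omega>. (Vr t \<omega>, Pp t \<omega>, Qq t \<omega>)) -` A \<inter> space P | A. A \<in> sets borel}))"
    and bounded_moment: "\<And>x. x \<in> phase_set \<Longrightarrow>
       (SUP t\<in>{1..}. \<integral>\<^sup>+ \<omega>. ennreal ((norm (model_volt K L (Vr t \<omega>) (Pp t \<omega>) (Qq t \<omega>) xstar
                                          - model_volt K L (Vr t \<omega>) (Pp t \<omega>) (Qq t \<omega>) x))\<^sup>2) \<partial>P) < \<infinity>"
begin

sublocale prob_space P by (rule ps)

definition "Q = matrix_inv S"
definition "q z = z \<bullet> (Q *v z)"
definition "inp t \<omega> = (Vr t \<omega>, Pp t \<omega>, Qq t \<omega>)"
definition "Gn = (\<Union>t\<in>{1..}. {N t -` A \<inter> space P | A. A \<in> sets (borel :: (real^'m) measure)})"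
definition "Gi = (\<Union>t\<in>{1..}. {inp t -` A \<inter> space P | A. A \<in> sets (borel :: ((real^('m \<times> 3)) \<times> (real^'m) \<times> (real^'m)) measure)})"
definition "MN = sigma (space P) Gn"
definition "MI = sigma (space P) Gi"

lemma q_meas[measurable]: "q \<in> borel_measurable borel"
  unfolding q_def[abs_def] by measurable

lemma q_nn: "0 \<le> q z" unfolding q_def Q_def by (rule inv_psd(1)[OF S_pd])

lemma N_meas: "t \<ge> 1 \<Longrightarrow> N t \<in> borel_measurable P"
  using distributed_measurable[OF gauss] by (simp add: measurable_lborel1)

lemma inp_meas: "t \<ge> 1 \<Longrightarrow> inp t \<in> borel_measurable P"
  using inputs_rv by (simp add: inp_def[abs_def])

lemma Gn_ev: "Gn \<subseteq> events"
  unfolding Gn_def using N_meas by (auto intro!: measurable_sets)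

lemma Gi_ev: "Gi \<subseteq> events"
  unfolding Gi_def using inp_meas by (auto intro!: measurable_sets)

lemma Gn_pow: "Gn \<subseteq> Pow (space P)" using Gn_ev sets.sets_into_space by auto
lemma Gi_pow: "Gi \<subseteq> Pow (space P)" using Gi_ev sets.sets_into_space by auto

lemma N_MN: "t \<ge> 1 \<Longrightarrow> N t \<in> borel_measurable MN"
  unfolding MN_def
proof (rule measurableI)
  fix x assume "x \<in> space (sigma (space P) Gn)" then show "N t x \<in> space borel" by simp
next
  fix A :: "(real^'m) set" assume t: "t \<ge> 1" and A: "A \<in> sets borel"
  have "N t -` A \<inter> space P \<in> Gn" unfolding Gn_def using t A by blast
  then show "N t -` A \<inter> space (sigma (space P) Gn) \<in> sets (sigma (space P) Gn)"
    using Gn_pow by (simp add: space_measure_of sets_measure_of sigma_sets.Basic)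
qed

lemma inp_MI: "t \<ge> 1 \<Longrightarrow> inp t \<in> borel_measurable MI"
  unfolding MI_def
proof (rule measurableI)
  fix x assume "x \<in> space (sigma (space P) Gi)" then show "inp t x \<in> space borel" by simp
next
  fix A :: "((real^('m \<times> 3)) \<times> (real^'m) \<times> (real^'m)) set" assume t: "t \<ge> 1" and A: "A \<in> sets borel"
  have "inp t -` A \<inter> space P \<in> Gi" unfolding Gi_def using t A by blast
  then show "inp t -` A \<inter> space (sigma (space P) Gi) \<in> sets (sigma (space P) Gi)"
    using Gi_pow by (simp add: space_measure_of sets_measure_of sigma_sets.Basic)
qed

lemma MN_sub: "f \<in> measurable MN M' \<Longrightarrow> f \<in> measurable P M'"
  unfolding MN_def by (rule meas_sigma_sub[OF Gn_ev])

lemma MI_sub: "f \<in> measurable MI M' \<Longrightarrow> f \<in> measurable P M'"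
  unfolding MI_def by (rule meas_sigma_sub[OF Gi_ev])

lemma indNI:
  fixes f g :: "'w \<Rightarrow> real"
  assumes f: "f \<in> borel_measurable MN" and g: "g \<in> borel_measurable MI"
  shows "indep_var borel f borel g"
proof (rule indep_var_sub)
  show "indep_set (sigma_sets (space P) Gn) (sigma_sets (space P) Gi)"
    using noise_indep_inputs unfolding Gn_def Gi_def inp_def .
  show "f \<in> borel_measurable (sigma (space P) Gn)" using f unfolding MN_def .
  show "g \<in> borel_measurable (sigma (space P) Gi)" using g unfolding MI_def .
qed (use Gn_pow Gi_pow MN_sub[OF f] MI_sub[OF g] in auto)

lemma indNN: "s \<ge> 1 \<Longrightarrow> t \<ge> 1 \<Longrightarrow> s \<noteq> t \<Longrightarrow> indep_var borel (N s) borel (N t)"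
  using indep_vars_pair[OF noise_iid, of s t] by simp

lemma tot: "(\<integral>\<^sup>+z. ennreal (mvn_density S z) \<partial>lborel) = 1"
proof -
  have D: "distr P lborel (N 1) = density lborel (\<lambda>z. ennreal (mvn_density S z))"
    using distributed_distr_eq_density[OF gauss[of 1]] by simp
  have "emeasure (distr P lborel (N 1)) UNIV = emeasure P (N 1 -` UNIV \<inter> space P)"
    by (rule emeasure_distr) (use N_meas[of 1] in \<open>auto simp: measurable_lborel1\<close>)
  also have "\<dots> = 1" using emeasure_space_1 by simp
  finally have "emeasure (density lborel (\<lambda>z. ennreal (mvn_density S z))) UNIV = 1" using D by simp
  then show ?thesis by (simp add: emeasure_density)
qed

lemma dens_nn: "0 \<le> mvn_density S z" by (rule gauss_facts(1)[OF S_pd tot])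

lemma EN:
  fixes g :: "real^'m \<Rightarrow> real"
  assumes t: "t \<ge> 1" and g[measurable]: "g \<in> borel_measurable borel"
    and bd: "\<And>z. \<bar>g z\<bar> \<le> C * (1 + q z)\<^sup>2"
  shows "integrable P (\<lambda>\<omega>. g (N t \<omega>))"
    and "(\<integral>\<omega>. g (N t \<omega>) \<partial>P) = (\<integral>z. mvn_density S z * g z \<partial>lborel)"
proof -
  have I: "integrable lborel (\<lambda>z. mvn_density S z * g z)"
    by (rule gauss_integrable[OF S_pd tot g]) (use bd in \<open>simp add: q_def Q_def\<close>)
  show "integrable P (\<lambda>\<omega>. g (N t \<omega>))"
    using distributed_integrable[OF gauss[OF t], of g] I dens_nn by simp
  show "(\<integral>\<omega>. g (N t \<omega>) \<partial>P) = (\<integral>z. mvn_density S z * g z \<partial>lborel)"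
    using distributed_integral[OF gauss[OF t], of g] dens_nn by simp
qed


lemma mu_ex: "\<exists>\<mu>>0. \<forall>z. \<mu> * (norm z)\<^sup>2 \<le> q z"
  unfolding q_def Q_def by (rule quad_lower) (rule inv_psd(2)[OF S_pd])

definition "mu = (SOME \<mu>. \<mu> > 0 \<and> (\<forall>z. \<mu> * (norm z)\<^sup>2 \<le> q z))"

lemma mu: "0 < mu" "\<And>z. mu * (norm z)\<^sup>2 \<le> q z"
proof -
  have "mu > 0 \<and> (\<forall>z. mu * (norm z)\<^sup>2 \<le> q z)"
    unfolding mu_def using mu_ex by (rule someI_ex) 
  then show "0 < mu" "\<And>z. mu * (norm z)\<^sup>2 \<le> q z" by auto
qed

lemma one_le_sq: "1 \<le> (1 + q z)\<^sup>2" and q_le_sq: "q z \<le> (1 + q z)\<^sup>2"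
  using q_nn[of z] by (simp_all add: power2_eq_square algebra_simps)

lemma b_q: "\<bar>q z\<bar> \<le> 1 * (1 + q z)\<^sup>2" using q_nn[of z] q_le_sq[of z] by simp

lemma b_norm2: "(norm z)\<^sup>2 \<le> (1 / mu) * (1 + q z)\<^sup>2"
proof -
  have "(norm z)\<^sup>2 \<le> q z / mu" using mu by (simp add: field_simps mult.commute)
  also have "\<dots> \<le> (1 + q z)\<^sup>2 / mu" using mu q_le_sq[of z] by (simp add: divide_right_mono)
  finally show ?thesis by simp
qed

lemma b_comp: "\<bar>z $ k\<bar> \<le> (1 + 1 / mu) * (1 + q z)\<^sup>2"
proof -
  have "\<bar>z $ k\<bar> \<le> norm z" by (rule component_le_norm_cart)
  also have "norm z \<le> 1 + (norm z)\<^sup>2"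
    by (smt (verit) power2_eq_square mult_le_cancel_left1 norm_ge_zero zero_le_square)
  also have "\<dots> \<le> (1 + q z)\<^sup>2 + (1 / mu) * (1 + q z)\<^sup>2"
    using one_le_sq[of z] b_norm2[of z] by linarith
  finally show ?thesis by (simp add: algebra_simps)
qed

definition "m = (\<integral>z. mvn_density S z * q z \<partial>lborel)"

lemma b_W: "\<bar>(q z - m)\<^sup>2\<bar> \<le> (2 + 2 * m\<^sup>2) * (1 + q z)\<^sup>2"
proof -
  have "(q z - m)\<^sup>2 \<le> 2 * ((q z)\<^sup>2 + m\<^sup>2)" using sq_add_le[of "q z" "- m"] by simp
  also have "(q z)\<^sup>2 \<le> (1 + q z)\<^sup>2" using q_nn[of z] by (intro power_mono) auto
  then have "2 * ((q z)\<^sup>2 + m\<^sup>2) \<le> 2 * (1 + q z)\<^sup>2 + 2 * m\<^sup>2 * (1 + q z)\<^sup>2"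
    using one_le_sq[of z] mult_left_mono[OF one_le_sq[of z], of "m\<^sup>2"] by simp
  finally show ?thesis by (simp add: algebra_simps)
qed

definition "W t \<omega> = (if t = 0 then 0 else q (N t \<omega>) - m)"

lemma W_facts:
  assumes t: "t \<ge> 1"
  shows "integrable P (\<lambda>\<omega>. q (N t \<omega>))" "(\<integral>\<omega>. q (N t \<omega>) \<partial>P) = m"
    "integrable P (\<lambda>\<omega>. (q (N t \<omega>) - m)\<^sup>2)"
    "(\<integral>\<omega>. (q (N t \<omega>) - m)\<^sup>2 \<partial>P) = (\<integral>z. mvn_density S z * (q z - m)\<^sup>2 \<partial>lborel)"
  using EN[OF t q_meas b_q] EN[OF t _ b_W] unfolding m_def by auto

lemma W_slln: "AE \<omega> in P. (\<lambda>T. (\<Sum>t=1..T. W t \<omega>) / real T) \<longlonglongrightarrow> 0"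
proof (rule slln_L2)
  show "W t \<in> borel_measurable P" for t
    unfolding W_def[abs_def] using N_meas[of t] by (cases "t = 0") auto
  show "integrable P (\<lambda>\<omega>. (W t \<omega>)\<^sup>2)" for t
    unfolding W_def using W_facts(3)[of t] by (cases "t = 0") auto
  show "(\<integral>\<omega>. W s \<omega> * W t \<omega> \<partial>P) = 0" if "s \<noteq> t" for s t
  proof (cases "s = 0 \<or> t = 0")
    case True then show ?thesis by (auto simp: W_def)
  next
    case False
    then have st: "s \<ge> 1" "t \<ge> 1" by auto
    have ind: "indep_var borel (\<lambda>\<omega>. q (N s \<omega>) - m) borel (\<lambda>\<omega>. q (N t \<omega>) - m)"
      using indep_var_compose[OF indNN[OF st that], of "\<lambda>z. q z - m" borel "\<lambda>z. q z - m" borel]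
      by (simp add: comp_def)
    have "(\<integral>\<omega>. W s \<omega> * W t \<omega> \<partial>P) = (\<integral>\<omega>. (q (N s \<omega>) - m) * (q (N t \<omega>) - m) \<partial>P)"
      using False by (simp add: W_def)
    also have "\<dots> = (\<integral>\<omega>. q (N s \<omega>) - m \<partial>P) * (\<integral>\<omega>. q (N t \<omega>) - m \<partial>P)"
      by (rule indep_var_lebesgue_integral[OF ind]) (use W_facts(1)[OF st(1)] W_facts(1)[OF st(2)] in auto)
    also have "\<dots> = 0" using W_facts(1,2)[OF st(1)] by (simp add: prob_space)
    finally show ?thesis .
  qed
  show "(\<integral>\<omega>. (W t \<omega>)\<^sup>2 \<partial>P) \<le> (\<integral>z. mvn_density S z * (q z - m)\<^sup>2 \<partial>lborel)" for t
  proof (cases "t = 0")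
    case True
    have nn: "0 \<le> (\<integral>\<omega>. (q (N 1 \<omega>) - m)\<^sup>2 \<partial>P)" by (rule integral_nonneg_AE) simp
    have h: "0 \<le> (\<integral>z. mvn_density S z * (q z - m)\<^sup>2 \<partial>lborel)"
      using W_facts(4)[of 1] nn by linarith
    show ?thesis using True h by (simp add: W_def)
  next
    case False then show ?thesis using W_facts(4)[of t] by (simp add: W_def)
  qed
qed

definition "Dfun x (y :: (real^('m \<times> 3)) \<times> (real^'m) \<times> (real^'m)) = model_volt K L (fst y) (fst (snd y)) (snd (snd y)) xstar
                       - model_volt K L (fst y) (fst (snd y)) (snd (snd y)) x"
definition "D x t \<omega> = Dfun x (inp t \<omega>)"
definition "Bm v = transpose Q *v v + Q *v v"
definition "bb x t \<omega> = Bm (D x t \<omega>)"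
definition "Y x t \<omega> = (if t = 0 then 0 else bb x t \<omega> \<bullet> N t \<omega>)"
definition "Mx x = enn2real (SUP t\<in>{1..}. \<integral>\<^sup>+ \<omega>. ennreal ((norm (model_volt K L (Vr t \<omega>) (Pp t \<omega>) (Qq t \<omega>) xstar
                                          - model_volt K L (Vr t \<omega>) (Pp t \<omega>) (Qq t \<omega>) x))\<^sup>2) \<partial>P)"
definition "m2 = (\<integral>z. mvn_density S z * (norm z)\<^sup>2 \<partial>lborel)"

lemma Dfun_meas[measurable]: "Dfun x \<in> borel_measurable borel"
  unfolding Dfun_def[abs_def] model_volt_def
  by (intro borel_measurable_continuous_onI continuous_intros)

lemma Bm_meas[measurable]: "Bm \<in> borel_measurable borel"
  unfolding Bm_def[abs_def]
  by (intro borel_measurable_continuous_onI continuous_intros)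

lemma Bc_ex: "\<exists>B>0. \<forall>v. norm (Bm v) \<le> norm v * B"
  unfolding Bm_def
  by (intro bounded_linear.pos_bounded bounded_linear_add matrix_vector_mul_bounded_linear)

definition "Bc = (SOME B. B > 0 \<and> (\<forall>v. norm (Bm v) \<le> norm v * B))"

lemma Bc: "0 < Bc" "\<And>v. norm (Bm v) \<le> norm v * Bc"
proof -
  have "Bc > 0 \<and> (\<forall>v. norm (Bm v) \<le> norm v * Bc)"
    unfolding Bc_def using Bc_ex by (rule someI_ex)
  then show "0 < Bc" "\<And>v. norm (Bm v) \<le> norm v * Bc" by auto
qed

lemma D_eq: "D x t \<omega> = model_volt K L (Vr t \<omega>) (Pp t \<omega>) (Qq t \<omega>) xstar - model_volt K L (Vr t \<omega>) (Pp t \<omega>) (Qq t \<omega>) x"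
  by (simp add: D_def Dfun_def inp_def)

lemma MI_comp: "t \<ge> 1 \<Longrightarrow> g \<in> borel_measurable borel \<Longrightarrow> (\<lambda>\<omega>. g (D x t \<omega>)) \<in> borel_measurable MI"
  unfolding D_def using measurable_compose[OF inp_MI measurable_compose[OF Dfun_meas]] by auto

lemma MN_comp: "t \<ge> 1 \<Longrightarrow> g \<in> borel_measurable borel \<Longrightarrow> (\<lambda>\<omega>. g (N t \<omega>)) \<in> borel_measurable MN"
  using measurable_compose[OF N_MN] by auto

lemma Dsq:
  assumes x: "x \<in> phase_set" and t: "t \<ge> 1"
  shows "integrable P (\<lambda>\<omega>. (norm (D x t \<omega>))\<^sup>2)" "(\<integral>\<omega>. (norm (D x t \<omega>))\<^sup>2 \<partial>P) \<le> Mx x"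
proof -
  have meas: "(\<lambda>\<omega>. (norm (D x t \<omega>))\<^sup>2) \<in> borel_measurable P"
    using MI_sub[OF MI_comp[OF t, of "\<lambda>v. (norm v)\<^sup>2"]] by simp
  have le: "(\<integral>\<^sup>+\<omega>. ennreal ((norm (D x t \<omega>))\<^sup>2) \<partial>P) \<le> (SUP t\<in>{1..}. \<integral>\<^sup>+ \<omega>. ennreal ((norm (model_volt K L (Vr t \<omega>) (Pp t \<omega>) (Qq t \<omega>) xstar
                                          - model_volt K L (Vr t \<omega>) (Pp t \<omega>) (Qq t \<omega>) x))\<^sup>2) \<partial>P)"
    unfolding D_eq by (rule SUP_upper) (use t in auto)
  have fin: "(\<integral>\<^sup>+\<omega>. ennreal ((norm (D x t \<omega>))\<^sup>2) \<partial>P) < \<infinity>"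
    using le bounded_moment[OF x] by (rule le_less_trans)
  show "integrable P (\<lambda>\<omega>. (norm (D x t \<omega>))\<^sup>2)"
    by (rule integrableI_bounded[OF meas]) (use fin in simp)
  have "(\<integral>\<omega>. (norm (D x t \<omega>))\<^sup>2 \<partial>P) = enn2real (\<integral>\<^sup>+\<omega>. ennreal ((norm (D x t \<omega>))\<^sup>2) \<partial>P)"
    by (rule integral_eq_nn_integral[OF meas]) simp
  also have "\<dots> \<le> Mx x" unfolding Mx_def
    by (rule enn2real_mono[OF le]) (use bounded_moment[OF x] in simp)
  finally show "(\<integral>\<omega>. (norm (D x t \<omega>))\<^sup>2 \<partial>P) \<le> Mx x" .
qed

lemma Mx_nn: "0 \<le> Mx x" unfolding Mx_def by simp

lemma bb_le: "(norm (bb x t \<omega>))\<^sup>2 \<le> Bc\<^sup>2 * (norm (D x t \<omega>))\<^sup>2"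
proof -
  have "norm (bb x t \<omega>) \<le> norm (D x t \<omega>) * Bc" unfolding bb_def by (rule Bc(2))
  then have "(norm (bb x t \<omega>))\<^sup>2 \<le> (norm (D x t \<omega>) * Bc)\<^sup>2" by (intro power_mono) auto
  then show ?thesis by (simp add: power_mult_distrib mult.commute)
qed

lemma bb_MI: "t \<ge> 1 \<Longrightarrow> g \<in> borel_measurable borel \<Longrightarrow> (\<lambda>\<omega>. g (bb x t \<omega>)) \<in> borel_measurable MI"
  unfolding bb_def using MI_comp[of t "\<lambda>v. g (Bm v)" x] by simp

lemma bbsq:
  assumes x: "x \<in> phase_set" and t: "t \<ge> 1"
  shows "integrable P (\<lambda>\<omega>. (norm (bb x t \<omega>))\<^sup>2)" "(\<integral>\<omega>. (norm (bb x t \<omega>))\<^sup>2 \<partial>P) \<le> Bc\<^sup>2 * Mx x"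
proof -
  have meas: "(\<lambda>\<omega>. (norm (bb x t \<omega>))\<^sup>2) \<in> borel_measurable P"
    using MI_sub[OF bb_MI[OF t, of "\<lambda>v. (norm v)\<^sup>2"]] by simp
  have I2: "integrable P (\<lambda>\<omega>. Bc\<^sup>2 * (norm (D x t \<omega>))\<^sup>2)"
    by (intro integrable_mult_right Dsq[OF x t])
  show I: "integrable P (\<lambda>\<omega>. (norm (bb x t \<omega>))\<^sup>2)"
    by (rule Bochner_Integration.integrable_bound[OF I2 meas]) (use bb_le in simp)
  have "(\<integral>\<omega>. (norm (bb x t \<omega>))\<^sup>2 \<partial>P) \<le> (\<integral>\<omega>. Bc\<^sup>2 * (norm (D x t \<omega>))\<^sup>2 \<partial>P)"
    by (rule integral_mono[OF I I2 bb_le])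
  also have "\<dots> \<le> Bc\<^sup>2 * Mx x"
    using Dsq(2)[OF x t] by (simp add: mult_left_mono)
  finally show "(\<integral>\<omega>. (norm (bb x t \<omega>))\<^sup>2 \<partial>P) \<le> Bc\<^sup>2 * Mx x" .
qed

lemma Nsq:
  assumes t: "t \<ge> 1"
  shows "integrable P (\<lambda>\<omega>. (norm (N t \<omega>))\<^sup>2)" "(\<integral>\<omega>. (norm (N t \<omega>))\<^sup>2 \<partial>P) = m2"
proof -
  have b: "\<And>z. \<bar>(norm z)\<^sup>2\<bar> \<le> (1 / mu) * (1 + q z)\<^sup>2" using b_norm2 by simp
  show "integrable P (\<lambda>\<omega>. (norm (N t \<omega>))\<^sup>2)" "(\<integral>\<omega>. (norm (N t \<omega>))\<^sup>2 \<partial>P) = m2"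
    using EN[OF t _ b] unfolding m2_def by auto
qed

lemma m2_nn: "0 \<le> m2"
  unfolding m2_def by (rule integral_nonneg_AE) (simp add: dens_nn)

lemma Ncomp:
  assumes t: "t \<ge> 1"
  shows "integrable P (\<lambda>\<omega>. N t \<omega> $ k)" "(\<integral>\<omega>. N t \<omega> $ k \<partial>P) = 0"
proof -
  show "integrable P (\<lambda>\<omega>. N t \<omega> $ k)" using EN(1)[OF t _ b_comp[where k=k]] by simp
  have e: "(\<integral>\<omega>. N t \<omega> $ k \<partial>P) = (\<integral>z. mvn_density S z * z $ k \<partial>lborel)"
    using EN(2)[OF t _ b_comp[where k=k]] by simp
  have "(\<integral>z. mvn_density S z * z $ k \<partial>lborel) = (\<integral>z. mvn_density S (- z) * (- z) $ k \<partial>lborel)"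
    by (rule lborel_neg_integral) simp
  also have "\<dots> = - (\<integral>z. mvn_density S z * z $ k \<partial>lborel)"
    by (simp add: mvn_sym)
  finally show "(\<integral>\<omega>. N t \<omega> $ k \<partial>P) = 0" using e by simp
qed


lemma N_MN': "t \<ge> 1 \<Longrightarrow> (\<lambda>\<omega>. N t \<omega>) \<in> borel_measurable MN" using N_MN by simp
lemma bb_MI': "t \<ge> 1 \<Longrightarrow> (\<lambda>\<omega>. bb x t \<omega>) \<in> borel_measurable MI" using bb_MI[of t "\<lambda>v. v"] by simp

lemma comp_sq_le: "(v $ k)\<^sup>2 \<le> (norm v)\<^sup>2" for v :: "real^'n::finite"
proof -
  have "(\<bar>v $ k\<bar>)\<^sup>2 \<le> (norm v)\<^sup>2" by (intro power_mono component_le_norm_cart) simp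
  then show ?thesis by simp
qed

lemma Y_sq_le: "t \<ge> 1 \<Longrightarrow> (Y x t \<omega>)\<^sup>2 \<le> (norm (N t \<omega>))\<^sup>2 * (norm (bb x t \<omega>))\<^sup>2"
proof -
  assume "t \<ge> 1"
  then have "(Y x t \<omega>)\<^sup>2 = (\<bar>bb x t \<omega> \<bullet> N t \<omega>\<bar>)\<^sup>2" by (simp add: Y_def)
  also have "\<dots> \<le> (norm (bb x t \<omega>) * norm (N t \<omega>))\<^sup>2"
    by (intro power_mono Cauchy_Schwarz_ineq2) auto
  finally show ?thesis by (simp add: power_mult_distrib mult.commute)
qed

lemma Y_slln:
  assumes x: "x \<in> phase_set"
  shows "AE \<omega> in P. (\<lambda>T. (\<Sum>t=1..T. Y x t \<omega>) / real T) \<longlonglongrightarrow> 0"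
proof (rule slln_L2[where C = "Bc\<^sup>2 * Mx x * m2"])
  have C0: "0 \<le> Bc\<^sup>2 * Mx x * m2" using Mx_nn m2_nn by simp
  have ind: "indep_var borel (\<lambda>\<omega>. (norm (N t \<omega>))\<^sup>2) borel (\<lambda>\<omega>. (norm (bb x t \<omega>))\<^sup>2)" if t: "t \<ge> 1" for t
  proof (rule indNI)
    have [measurable]: "(\<lambda>\<omega>. N t \<omega>) \<in> borel_measurable MN" by (rule N_MN'[OF t])
    show "(\<lambda>\<omega>. (norm (N t \<omega>))\<^sup>2) \<in> borel_measurable MN" by measurable
    have [measurable]: "(\<lambda>\<omega>. bb x t \<omega>) \<in> borel_measurable MI" by (rule bb_MI'[OF t])
    show "(\<lambda>\<omega>. (norm (bb x t \<omega>))\<^sup>2) \<in> borel_measurable MI" by measurable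
  qed
  have IP: "integrable P (\<lambda>\<omega>. (norm (N t \<omega>))\<^sup>2 * (norm (bb x t \<omega>))\<^sup>2)" if t: "t \<ge> 1" for t
    by (rule indep_var_integrable[OF ind[OF t] Nsq(1)[OF t] bbsq(1)[OF x t]])
  have EP: "(\<integral>\<omega>. (norm (N t \<omega>))\<^sup>2 * (norm (bb x t \<omega>))\<^sup>2 \<partial>P) \<le> Bc\<^sup>2 * Mx x * m2" if t: "t \<ge> 1" for t
  proof -
    have "(\<integral>\<omega>. (norm (N t \<omega>))\<^sup>2 * (norm (bb x t \<omega>))\<^sup>2 \<partial>P)
        = (\<integral>\<omega>. (norm (N t \<omega>))\<^sup>2 \<partial>P) * (\<integral>\<omega>. (norm (bb x t \<omega>))\<^sup>2 \<partial>P)"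
      by (rule indep_var_lebesgue_integral[OF ind[OF t] Nsq(1)[OF t] bbsq(1)[OF x t]])
    also have "\<dots> = m2 * (\<integral>\<omega>. (norm (bb x t \<omega>))\<^sup>2 \<partial>P)" using Nsq(2)[OF t] by simp
    also have "\<dots> \<le> m2 * (Bc\<^sup>2 * Mx x)" by (rule mult_left_mono[OF bbsq(2)[OF x t] m2_nn])
    finally show ?thesis by (simp add: mult_ac)
  qed
  have bbm: "bb x t \<in> borel_measurable P" if "t \<ge> 1" for t
    using MI_sub[OF bb_MI'[OF that]] by simp
  show "Y x t \<in> borel_measurable P" for t
  proof (cases "t = 0")
    case True then show ?thesis by (simp add: Y_def[abs_def])
  next
    case False
    then have t: "t \<ge> 1" by simp
    have [measurable]: "bb x t \<in> borel_measurable P" "N t \<in> borel_measurable P" using bbm[OF t] N_meas[OF t] by auto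
    have "Y x t = (\<lambda>\<omega>. bb x t \<omega> \<bullet> N t \<omega>)" using False by (simp add: Y_def[abs_def])
    then show ?thesis by simp
  qed
  then have Ym[measurable]: "Y x t \<in> borel_measurable P" for t .
  show "integrable P (\<lambda>\<omega>. (Y x t \<omega>)\<^sup>2)" for t
  proof (cases "t = 0")
    case True then show ?thesis by (simp add: Y_def)
  next
    case False
    then have t: "t \<ge> 1" by simp
    show ?thesis
      by (rule Bochner_Integration.integrable_bound[OF IP[OF t]]) (use Y_sq_le[OF t] in simp_all)
  qed
  show "(\<integral>\<omega>. (Y x t \<omega>)\<^sup>2 \<partial>P) \<le> Bc\<^sup>2 * Mx x * m2" for t
  proof (cases "t = 0")
    case True then show ?thesis using C0 by (simp add: Y_def)
  next
    case False
    then have t: "t \<ge> 1" by simp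
    have I: "integrable P (\<lambda>\<omega>. (Y x t \<omega>)\<^sup>2)"
      by (rule Bochner_Integration.integrable_bound[OF IP[OF t]]) (use Y_sq_le[OF t] in simp_all)
    have "(\<integral>\<omega>. (Y x t \<omega>)\<^sup>2 \<partial>P) \<le> (\<integral>\<omega>. (norm (N t \<omega>))\<^sup>2 * (norm (bb x t \<omega>))\<^sup>2 \<partial>P)"
      by (rule integral_mono[OF I IP[OF t] Y_sq_le[OF t]])
    then show ?thesis using EP[OF t] by linarith
  qed
  show "(\<integral>\<omega>. Y x s \<omega> * Y x t \<omega> \<partial>P) = 0" if st: "s \<noteq> t" for s t
  proof (cases "s = 0 \<or> t = 0")
    case True then show ?thesis by (auto simp: Y_def)
  next
    case False
    then have s1: "s \<ge> 1" and t1: "t \<ge> 1" by auto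
    have [measurable]: "(\<lambda>\<omega>. N s \<omega>) \<in> borel_measurable MN" "(\<lambda>\<omega>. N t \<omega>) \<in> borel_measurable MN"
      using N_MN'[OF s1] N_MN'[OF t1] by auto
    have [measurable]: "(\<lambda>\<omega>. bb x s \<omega>) \<in> borel_measurable MI" "(\<lambda>\<omega>. bb x t \<omega>) \<in> borel_measurable MI"
      using bb_MI'[OF s1] bb_MI'[OF t1] by auto
    have indk: "indep_var borel (\<lambda>\<omega>. N s \<omega> $ k) borel (\<lambda>\<omega>. N t \<omega> $ l)" for k l
      using indep_var_compose[OF indNN[OF s1 t1 st], of "\<lambda>z. z $ k" borel "\<lambda>z. z $ l" borel]
      by (simp add: comp_def)
    have INN: "integrable P (\<lambda>\<omega>. N s \<omega> $ k * N t \<omega> $ l)" for k l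
      by (rule indep_var_integrable[OF indk Ncomp(1)[OF s1] Ncomp(1)[OF t1]])
    have ENN: "(\<integral>\<omega>. N s \<omega> $ k * N t \<omega> $ l \<partial>P) = 0" for k l
      using indep_var_lebesgue_integral[OF indk Ncomp(1)[OF s1] Ncomp(1)[OF t1], of k l] Ncomp(2)[OF s1, of k]
      by simp
    have Ibb: "integrable P (\<lambda>\<omega>. bb x s \<omega> $ k * bb x t \<omega> $ l)" for k l
    proof (rule Bochner_Integration.integrable_bound)
      show "integrable P (\<lambda>\<omega>. (norm (bb x s \<omega>))\<^sup>2 + (norm (bb x t \<omega>))\<^sup>2)"
        by (intro Bochner_Integration.integrable_add bbsq(1)[OF x s1] bbsq(1)[OF x t1])
      show "(\<lambda>\<omega>. bb x s \<omega> $ k * bb x t \<omega> $ l) \<in> borel_measurable P"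
        using borel_measurable_times[OF measurable_compose[OF bbm[OF s1] borel_measurable_nth]
            measurable_compose[OF bbm[OF t1] borel_measurable_nth]] by simp
      show "AE \<omega> in P. norm (bb x s \<omega> $ k * bb x t \<omega> $ l) \<le> norm ((norm (bb x s \<omega>))\<^sup>2 + (norm (bb x t \<omega>))\<^sup>2)"
      proof (intro AE_I2)
        fix \<omega>
        have "\<bar>bb x s \<omega> $ k * bb x t \<omega> $ l\<bar> \<le> (bb x s \<omega> $ k)\<^sup>2 + (bb x t \<omega> $ l)\<^sup>2" by (rule abs_mult_le_sq)
        also have "\<dots> \<le> (norm (bb x s \<omega>))\<^sup>2 + (norm (bb x t \<omega>))\<^sup>2" by (intro add_mono comp_sq_le)
        finally show "norm (bb x s \<omega> $ k * bb x t \<omega> $ l) \<le> norm ((norm (bb x s \<omega>))\<^sup>2 + (norm (bb x t \<omega>))\<^sup>2)" by simp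
      qed
    qed
    have indkl: "indep_var borel (\<lambda>\<omega>. N s \<omega> $ k * N t \<omega> $ l) borel (\<lambda>\<omega>. bb x s \<omega> $ k * bb x t \<omega> $ l)" for k l
    proof (rule indNI)
      show "(\<lambda>\<omega>. N s \<omega> $ k * N t \<omega> $ l) \<in> borel_measurable MN"
        using borel_measurable_times[OF measurable_compose[OF N_MN[OF s1] borel_measurable_nth]
            measurable_compose[OF N_MN[OF t1] borel_measurable_nth]] by simp
      show "(\<lambda>\<omega>. bb x s \<omega> $ k * bb x t \<omega> $ l) \<in> borel_measurable MI"
        using borel_measurable_times[OF measurable_compose[OF bb_MI'[OF s1] borel_measurable_nth]
            measurable_compose[OF bb_MI'[OF t1] borel_measurable_nth]] by simp
    qed
    have Iterm: "integrable P (\<lambda>\<omega>. (N s \<omega> $ k * N t \<omega> $ l) * (bb x s \<omega> $ k * bb x t \<omega> $ l))" for k l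
      by (rule indep_var_integrable[OF indkl INN Ibb])
    have Eterm: "(\<integral>\<omega>. (N s \<omega> $ k * N t \<omega> $ l) * (bb x s \<omega> $ k * bb x t \<omega> $ l) \<partial>P) = 0" for k l
      using indep_var_lebesgue_integral[OF indkl INN Ibb, of k l] ENN[of k l] by simp
    have expand: "Y x s \<omega> * Y x t \<omega> = (\<Sum>k\<in>UNIV. \<Sum>l\<in>UNIV. (N s \<omega> $ k * N t \<omega> $ l) * (bb x s \<omega> $ k * bb x t \<omega> $ l))" for \<omega>
      using False by (simp add: Y_def inner_vec_def sum_product mult_ac)
    have "(\<integral>\<omega>. Y x s \<omega> * Y x t \<omega> \<partial>P) = (\<integral>\<omega>. (\<Sum>k\<in>UNIV. \<Sum>l\<in>UNIV. (N s \<omega> $ k * N t \<omega> $ l) * (bb x s \<omega> $ k * bb x t \<omega> $ l)) \<partial>P)"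
      by (simp only: expand)
    also have "\<dots> = (\<Sum>k\<in>UNIV. \<Sum>l\<in>UNIV. (\<integral>\<omega>. (N s \<omega> $ k * N t \<omega> $ l) * (bb x s \<omega> $ k * bb x t \<omega> $ l) \<partial>P))"
      using Iterm by (simp add: Bochner_Integration.integral_sum)
    also have "\<dots> = 0" by (simp add: Eterm)
    finally show ?thesis .
  qed
qed


lemma cost_star: "cost_fun K L S Vr Pp Qq N xstar T xstar \<omega> = (1 / real T) * (\<Sum>t=1..T. q (N t \<omega>))"
  by (simp add: cost_fun_def q_def Q_def Let_def)

lemma term_eq: "t \<ge> 1 \<Longrightarrow>
   (let d = (model_volt K L (Vr t \<omega>) (Pp t \<omega>) (Qq t \<omega>) xstar + N t \<omega>)
                - model_volt K L (Vr t \<omega>) (Pp t \<omega>) (Qq t \<omega>) x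
        in d \<bullet> (matrix_inv S *v d)) = q (N t \<omega>) + Y x t \<omega> + D x t \<omega> \<bullet> (Q *v D x t \<omega>)"
proof -
  assume t: "t \<ge> 1"
  let ?D = "D x t \<omega>" and ?n = "N t \<omega>"
  have d: "(model_volt K L (Vr t \<omega>) (Pp t \<omega>) (Qq t \<omega>) xstar + N t \<omega>)
                - model_volt K L (Vr t \<omega>) (Pp t \<omega>) (Qq t \<omega>) x = ?D + ?n"
    by (simp add: D_eq algebra_simps)
  have e1: "(?D + ?n) \<bullet> (Q *v (?D + ?n)) = ?D \<bullet> (Q *v ?D) + ?D \<bullet> (Q *v ?n) + ?n \<bullet> (Q *v ?D) + ?n \<bullet> (Q *v ?n)"
    by (simp add: matrix_vector_right_distrib inner_add_left inner_add_right)
  have e2: "?D \<bullet> (Q *v ?n) = (transpose Q *v ?D) \<bullet> ?n" by (rule dot_mat)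
  have e3: "?n \<bullet> (Q *v ?D) = (Q *v ?D) \<bullet> ?n" by (rule inner_commute)
  have e4: "(transpose Q *v ?D) \<bullet> ?n + (Q *v ?D) \<bullet> ?n = Y x t \<omega>"
    using t by (simp add: Y_def bb_def Bm_def inner_add_left)
  have "(?D + ?n) \<bullet> (Q *v (?D + ?n)) = q ?n + Y x t \<omega> + ?D \<bullet> (Q *v ?D)"
    using e1 e2 e3 e4 unfolding q_def by linarith
  then show ?thesis unfolding d Let_def Q_def[symmetric] .
qed

lemma cost_lower: "cost_fun K L S Vr Pp Qq N xstar T x \<omega> \<ge> (1 / real T) * (\<Sum>t=1..T. q (N t \<omega>) + Y x t \<omega>)"
proof -
  have "(\<Sum>t=1..T. q (N t \<omega>) + Y x t \<omega>) \<le> (\<Sum>t=1..T. (let d = (model_volt K L (Vr t \<omega>) (Pp t \<omega>) (Qq t \<omega>) xstar + N t \<omega>)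
                - model_volt K L (Vr t \<omega>) (Pp t \<omega>) (Qq t \<omega>) x
        in d \<bullet> (matrix_inv S *v d)))"
  proof (rule sum_mono)
    fix t assume "t \<in> {1..T}"
    then have t: "t \<ge> 1" by simp
    have "0 \<le> D x t \<omega> \<bullet> (Q *v D x t \<omega>)" unfolding Q_def by (rule inv_psd(1)[OF S_pd])
    then show "q (N t \<omega>) + Y x t \<omega> \<le> (let d = (model_volt K L (Vr t \<omega>) (Pp t \<omega>) (Qq t \<omega>) xstar + N t \<omega>)
                - model_volt K L (Vr t \<omega>) (Pp t \<omega>) (Qq t \<omega>) x
        in d \<bullet> (matrix_inv S *v d))" using term_eq[OF t, of \<omega> x] by simp
  qed
  then show ?thesis unfolding cost_fun_def by (intro mult_left_mono) auto
qed

lemma main: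
  assumes fin: "finite (phase_set :: (real^('m \<times> 3)) set)"
  shows "AE \<omega> in P.
           convergent (\<lambda>T. cost_fun K L S Vr Pp Qq N xstar T xstar \<omega>) \<and>
           (\<forall>x\<in>phase_set.
              Liminf sequentially (\<lambda>T. ereal (cost_fun K L S Vr Pp Qq N xstar T x \<omega>))
                \<ge> ereal (lim (\<lambda>T. cost_fun K L S Vr Pp Qq N xstar T xstar \<omega>)))"
proof -
  have AE2: "AE \<omega> in P. \<forall>x\<in>phase_set. (\<lambda>T. (\<Sum>t=1..T. Y x t \<omega>) / real T) \<longlonglongrightarrow> 0"
    by (rule AE_finite_allI[OF fin]) (rule Y_slln)
  from W_slln AE2 show ?thesis
  proof eventually_elim
    case (elim \<omega>)
    have eqA: "cost_fun K L S Vr Pp Qq N xstar T xstar \<omega> = (\<Sum>t=1..T. W t \<omega>) / real T + m" if T: "T \<ge> 1" for T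
    proof -
      have "(\<Sum>t=1..T. W t \<omega>) = (\<Sum>t=1..T. q (N t \<omega>) - m)"
        by (rule sum.cong) (auto simp: W_def)
      also have "\<dots> = (\<Sum>t=1..T. q (N t \<omega>)) - real T * m" by (simp add: sum_subtractf)
      finally show ?thesis using T unfolding cost_star by (simp add: field_simps)
    qed
    have limA: "(\<lambda>T. cost_fun K L S Vr Pp Qq N xstar T xstar \<omega>) \<longlonglongrightarrow> m"
    proof -
      have "(\<lambda>T. (\<Sum>t=1..T. W t \<omega>) / real T + m) \<longlonglongrightarrow> 0 + m"
        by (intro tendsto_add elim(1) tendsto_const)
      moreover have "\<forall>\<^sub>F T in sequentially. (\<Sum>t=1..T. W t \<omega>) / real T + m = cost_fun K L S Vr Pp Qq N xstar T xstar \<omega>"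
        using eventually_ge_at_top[of 1] by eventually_elim (simp add: eqA)
      ultimately show ?thesis using tendsto_cong by force
    qed
    have lim_eq: "lim (\<lambda>T. cost_fun K L S Vr Pp Qq N xstar T xstar \<omega>) = m" by (rule limI[OF limA])
    show ?case
    proof (intro conjI ballI)
      show "convergent (\<lambda>T. cost_fun K L S Vr Pp Qq N xstar T xstar \<omega>)" using limA by (rule convergentI)
      fix x :: "real^('m \<times> 3)" assume x: "x \<in> phase_set"
      have low_eq: "(1 / real T) * (\<Sum>t=1..T. q (N t \<omega>) + Y x t \<omega>)
          = cost_fun K L S Vr Pp Qq N xstar T xstar \<omega> + (\<Sum>t=1..T. Y x t \<omega>) / real T" for T
        unfolding cost_star by (simp add: sum.distrib add_divide_distrib)
      have "(\<lambda>T. cost_fun K L S Vr Pp Qq N xstar T xstar \<omega> + (\<Sum>t=1..T. Y x t \<omega>) / real T) \<longlonglongrightarrow> m + 0"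
        by (intro tendsto_add limA) (use elim(2) x in blast)
      then have "(\<lambda>T. ereal ((1 / real T) * (\<Sum>t=1..T. q (N t \<omega>) + Y x t \<omega>))) \<longlonglongrightarrow> ereal m"
        unfolding low_eq by (intro tendsto_ereal) simp
      then have "Liminf sequentially (\<lambda>T. ereal ((1 / real T) * (\<Sum>t=1..T. q (N t \<omega>) + Y x t \<omega>))) = ereal m"
        by (intro lim_imp_Liminf) simp_all
      moreover have "Liminf sequentially (\<lambda>T. ereal ((1 / real T) * (\<Sum>t=1..T. q (N t \<omega>) + Y x t \<omega>)))
          \<le> Liminf sequentially (\<lambda>T. ereal (cost_fun K L S Vr Pp Qq N xstar T x \<omega>))"
        by (intro Liminf_mono always_eventually allI ereal_less_eq(3)[THEN iffD2] cost_lower)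
      ultimately show "Liminf sequentially (\<lambda>T. ereal (cost_fun K L S Vr Pp Qq N xstar T x \<omega>))
          \<ge> ereal (lim (\<lambda>T. cost_fun K L S Vr Pp Qq N xstar T xstar \<omega>))"
        using lim_eq by simp
    qed
  qed
qed

end

lemma finite_phase: "finite (phase_set :: (real^('m::finite \<times> 3)) set)"
proof (rule finite_subset)
  show "phase_set \<subseteq> (\<lambda>f::('m \<times> 3) \<Rightarrow> real. (\<chi> j. f j) :: real^('m \<times> 3)) ` (UNIV \<rightarrow>\<^sub>E {0::real, 1})"
  proof
    fix x :: "real^('m \<times> 3)" assume "x \<in> phase_set"
    then have "(\<lambda>j. x $ j) \<in> UNIV \<rightarrow>\<^sub>E {0::real, 1}" unfolding phase_set_def by auto
    moreover have "x = (\<chi> j. (\<lambda>j. x $ j) j)" by simp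
    ultimately show "x \<in> (\<lambda>f::('m \<times> 3) \<Rightarrow> real. (\<chi> j. f j) :: real^('m \<times> 3)) ` (UNIV \<rightarrow>\<^sub>E {0::real, 1})" by blast
  qed
  show "finite ((\<lambda>f::('m \<times> 3) \<Rightarrow> real. (\<chi> j. f j) :: real^('m \<times> 3)) ` (UNIV \<rightarrow>\<^sub>E {0::real, 1}))"
    by (intro finite_imageI finite_PiE) auto
qed

theorem lemma1:
  fixes P :: "'w measure"
    and K L :: "real^('m::finite \<times> 3)^('m \<times> 3)"
    and S :: "real^'m^'m"
    and Vr :: "nat \<Rightarrow> 'w \<Rightarrow> real^('m \<times> 3)"
    and Pp Qq N :: "nat \<Rightarrow> 'w \<Rightarrow> real^'m"
    and xstar :: "real^('m \<times> 3)"
  assumes "prob_space P"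
    and xstar: "xstar \<in> phase_set"
    and S_pd: "pos_def_mat S"
    and gauss: "\<And>t. t \<ge> 1 \<Longrightarrow> distributed P lborel (N t) (\<lambda>z. ennreal (mvn_density S z))"
    and inputs_rv: "\<And>t. t \<ge> 1 \<Longrightarrow> (\<lambda>\<omega>. (Vr t \<omega>, Pp t \<omega>, Qq t \<omega>)) \<in> borel_measurable P"
    and noise_iid: "prob_space.indep_vars P (\<lambda>_. borel) N {1..}"
    and noise_indep_inputs:
      "prob_space.indep_set P
         (sigma_sets (space P) (\<Union>t\<in>{1..}. {N t -` A \<inter> space P | A. A \<in> sets borel}))
         (sigma_sets (space P) (\<Union>t\<in>{1..}.
            {(\<lambda>\<omega>. (Vr t \<omega>, Pp t \<omega>, Qq t \<omega>)) -` A \<inter> space P | A. A \<in> sets borel}))"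
    and inputs_indep: "prob_space.indep_vars P (\<lambda>_. borel) (\<lambda>t \<omega>. (Vr t \<omega>, Pp t \<omega>, Qq t \<omega>)) {1..}"
    and bounded_moment: "\<And>x. x \<in> phase_set \<Longrightarrow>
       (SUP t\<in>{1..}. \<integral>\<^sup>+ \<omega>. ennreal ((norm (model_volt K L (Vr t \<omega>) (Pp t \<omega>) (Qq t \<omega>) xstar
                                          - model_volt K L (Vr t \<omega>) (Pp t \<omega>) (Qq t \<omega>) x))\<^sup>2) \<partial>P) < \<infinity>"
  shows "AE \<omega> in P.
           convergent (\<lambda>T. cost_fun K L S Vr Pp Qq N xstar T xstar \<omega>) \<and>
           (\<forall>x\<in>phase_set.
              Liminf sequentially (\<lambda>T. ereal (cost_fun K L S Vr Pp Qq N xstar T x \<omega>))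
                \<ge> ereal (lim (\<lambda>T. cost_fun K L S Vr Pp Qq N xstar T xstar \<omega>)))"
proof -
  interpret phase_setup P K L S Vr Pp Qq N xstar
    using assms by (simp add: phase_setup_def)
  show ?thesis by (rule main[OF finite_phase])
qed


end
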